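(* Assume (P). Let $T>0$ and $u\in C([0,T]\times\mathbb{R}^d)$ be such that $\|u(t,\cdot)-u(0,\cdot)\|_\infty\to0$ as $t\to0^+$ and $\sup_{t\in[0,T]}\|u(t,\cdot)\mathbf{1}_{\{|\cdot|\ge r\}}\|_\infty\to0$ as $r\to\infty$. Assume that for all $(t,x)\in(0,T]\times\mathbb{R}^d$, $\partial_tu(t,x)$ exists, $\mathcal{L}^{\kappa,0^+}_xu(t,x)$ is well defined, and $\partial_tu(t,x)=\mathcal{L}^{\kappa,0^+}_xu(t,x)$. If $\sup_{x\in\mathbb{R}^d}u(0,x)\ge0$, then $\sup_{x\in\mathbb{R}^d}u(t,x)\le\sup_{x\in\mathbb{R}^d}u(0,x)$ for every $t\in(0,T]$. Consequently, two such functions $u_1,u_2$ with $u_1(0,\cdot)=u_2(0,\cdot)$ coincide on $[0,T]\times\mathbb{R}^d$.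
   Context: Let $d\in\mathbb{N}$ and let $\nu:[0,\infty)\to[0,\infty]$ be non-increasing with $\int_{\mathbb{R}^d}(1\wedge|x|^2)\nu(|x|)\,dx<\infty$. Let $J:\mathbb{R}^d\to[0,\infty]$ be Borel with $\Lambda^{-1}\nu(|x|)\le J(x)\le\Lambda\nu(|x|)$ for all $x$, for some $\Lambda\ge1$. Let $\kappa:\mathbb{R}^d\times\mathbb{R}^d\to\mathbb{R}$ be Borel with $0<\kappa_0\le\kappa(x,z)\le\kappa_1$ and $|\kappa(x,z)-\kappa(y,z)|\le\kappa_2|x-y|^{\beta}$ for all $x,y,z$, where $\beta\in(0,1)$. For $r>0$ let $h(r)=\int_{\mathbb{R}^d}\big(1\wedge \tfrac{|x|^2}{r^2}\big)\nu(|x|)\,dx$. (WLSC): there are $\alpha_h\in(0,2]$, $C_h\ge1$ with $h(r)\le C_h\lambda^{\alpha_h}h(\lambda r)$ for all $\lambda\le1$, $r\le1$. (WUSC): there are $\beta_h\in(0,2]$, $c_h\in(0,1]$ with $h(r)\ge c_h\lambda^{\beta_h}h(\lambda r)$ for all $\lambda\le1$, $r\le1$. Case (P1): WLSC holds with $1<\alpha_h\le2$. Case (P2): WLSC and WUSC hold with $0<\alpha_h\le\beta_h<1$. Case (P3): WLSC holds, $J(z)=J(-z)$ and $\kappa(x,z)=\kappa(x,-z)$ for all $x,z$. "(P)" means one of (P1), (P2), (P3) holds. In the cases (P1), (P2), (P3) respectively, the operator is $\mathcal{L}^{\kappa}f(x)=\int_{\mathbb{R}^d}(f(x+z)-f(x)-\mathbf{1}_{|z|<1}\langle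 z,\nabla f(x)\rangle)\kappa(x,z)J(z)\,dz$, $\mathcal{L}^{\kappa}f(x)=\int_{\mathbb{R}^d}(f(x+z)-f(x))\kappa(x,z)J(z)\,dz$, $\mathcal{L}^{\kappa}f(x)=\tfrac12\int_{\mathbb{R}^d}(f(x+z)+f(x-z)-2f(x))\kappa(x,z)J(z)\,dz$. For $\varepsilon\in[0,1]$, $\mathcal{L}^{\kappa,\varepsilon}$ denotes the same expression with $J(z)$ replaced by $J(z)\mathbf{1}_{|z|>\varepsilon}$; $\mathcal{L}^{\kappa,\varepsilon}f(x)$ is well defined if the integral converges absolutely and, in case (P1), $\nabla f(x)$ exists. The weak operator is $\mathcal{L}^{\kappa,0^+}f(x):=\lim_{\varepsilon\to0^+}\mathcal{L}^{\kappa,\varepsilon}f(x)$, well defined when $\mathcal{L}^{\kappa,\varepsilon}f$ is well defined for all $\varepsilon\in(0,1]$ and the limit exists. A subscript $x$ indicates action in the variable $x$. *)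

theory Defs
  imports "HOL-Analysis.Analysis"
begin

datatype pcase = P1 | P2 | P3

definition hfun :: "(real \<Rightarrow> ennreal) \<Rightarrow> 'a::euclidean_space itself \<Rightarrow> real \<Rightarrow> ennreal" where
  "hfun \<nu> TYPE('a) r =
     (\<integral>\<^sup>+ x. ennreal (min 1 (norm (x::'a)^2 / r^2)) * \<nu> (norm x) \<partial>lborel)"

definition WLSC :: "(real \<Rightarrow> ennreal) \<Rightarrow> 'a::euclidean_space itself \<Rightarrow> real \<Rightarrow> real \<Rightarrow> bool" where
  "WLSC \<nu> ty \<alpha> C \<longleftrightarrow> 0 < \<alpha> \<and> \<alpha> \<le> 2 \<and> 1 \<le> C \<and>
     (\<forall>l r. 0 < l \<longrightarrow> l \<le> 1 \<longrightarrow> 0 < r \<longrightarrow> r \<le> 1 \<longrightarrow>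
        hfun \<nu> ty r \<le> ennreal (C * l powr \<alpha>) * hfun \<nu> ty (l * r))"

definition WUSC :: "(real \<Rightarrow> ennreal) \<Rightarrow> 'a::euclidean_space itself \<Rightarrow> real \<Rightarrow> real \<Rightarrow> bool" where
  "WUSC \<nu> ty \<beta> c \<longleftrightarrow> 0 < \<beta> \<and> \<beta> \<le> 2 \<and> 0 < c \<and> c \<le> 1 \<and>
     (\<forall>l r. 0 < l \<longrightarrow> l \<le> 1 \<longrightarrow> 0 < r \<longrightarrow> r \<le> 1 \<longrightarrow>
        hfun \<nu> ty r \<ge> ennreal (c * l powr \<beta>) * hfun \<nu> ty (l * r))"

definition case_hyp :: "pcase \<Rightarrow> (real \<Rightarrow> ennreal) \<Rightarrow> ('a::euclidean_space \<Rightarrow> ennreal)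
    \<Rightarrow> ('a \<Rightarrow> 'a \<Rightarrow> real) \<Rightarrow> bool" where
  "case_hyp c \<nu> J \<kappa> = (case c of
      P1 \<Rightarrow> (\<exists>\<alpha> C. WLSC \<nu> TYPE('a) \<alpha> C \<and> 1 < \<alpha>)
    | P2 \<Rightarrow> (\<exists>\<alpha> C \<beta> c. WLSC \<nu> TYPE('a) \<alpha> C \<and> WUSC \<nu> TYPE('a) \<beta> c \<and> \<alpha> \<le> \<beta> \<and> \<beta> < 1)
    | P3 \<Rightarrow> (\<exists>\<alpha> C. WLSC \<nu> TYPE('a) \<alpha> C) \<and> (\<forall>z. J z = J (-z)) \<and> (\<forall>x z. \<kappa> x z = \<kappa> x (-z)))"

text \<open>Integrand of the truncated operator L^{kappa,eps} (jump kernel J(z) 1_{|z|>eps}).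
  In case (P1) the gradient term <z, grad f(x)> is the Frechet derivative of f at x applied to z.\<close>
definition Lintegrand :: "pcase \<Rightarrow> ('a::euclidean_space \<Rightarrow> 'a \<Rightarrow> real) \<Rightarrow> ('a \<Rightarrow> ennreal)
    \<Rightarrow> real \<Rightarrow> ('a \<Rightarrow> real) \<Rightarrow> 'a \<Rightarrow> 'a \<Rightarrow> real" where
  "Lintegrand c \<kappa> J \<epsilon> f x z =
     (case c of
        P1 \<Rightarrow> f (x + z) - f x - (if norm z < 1 then frechet_derivative f (at x) z else 0)
      | P2 \<Rightarrow> f (x + z) - f x
      | P3 \<Rightarrow> (1/2) * (f (x + z) + f (x - z) - 2 * f x))
     * \<kappa> x z * enn2real (J z) * indicator {z. norm z > \<epsilon>} z"

definition Lop :: "pcase \<Rightarrow> ('a::euclidean_space \<Rightarrow> 'a \<Rightarrow> real) \<Rightarrow> ('a \<Rightarrow> ennreal)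
    \<Rightarrow> real \<Rightarrow> ('a \<Rightarrow> real) \<Rightarrow> 'a \<Rightarrow> real" where
  "Lop c \<kappa> J \<epsilon> f x = (\<integral> z. Lintegrand c \<kappa> J \<epsilon> f x z \<partial>lborel)"

definition Lop_wd :: "pcase \<Rightarrow> ('a::euclidean_space \<Rightarrow> 'a \<Rightarrow> real) \<Rightarrow> ('a \<Rightarrow> ennreal)
    \<Rightarrow> real \<Rightarrow> ('a \<Rightarrow> real) \<Rightarrow> 'a \<Rightarrow> bool" where
  "Lop_wd c \<kappa> J \<epsilon> f x \<longleftrightarrow> integrable lborel (Lintegrand c \<kappa> J \<epsilon> f x) \<and>
     (c = P1 \<longrightarrow> f differentiable (at x))"

definition Lweak_wd :: "pcase \<Rightarrow> ('a::euclidean_space \<Rightarrow> 'a \<Rightarrow> real) \<Rightarrow> ('a \<Rightarrow> ennreal)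
    \<Rightarrow> ('a \<Rightarrow> real) \<Rightarrow> 'a \<Rightarrow> bool" where
  "Lweak_wd c \<kappa> J f x \<longleftrightarrow> (\<forall>\<epsilon>. 0 < \<epsilon> \<and> \<epsilon> \<le> 1 \<longrightarrow> Lop_wd c \<kappa> J \<epsilon> f x) \<and>
     (\<exists>l. ((\<lambda>\<epsilon>. Lop c \<kappa> J \<epsilon> f x) \<longlongrightarrow> l) (at_right 0))"

definition Lweak :: "pcase \<Rightarrow> ('a::euclidean_space \<Rightarrow> 'a \<Rightarrow> real) \<Rightarrow> ('a \<Rightarrow> ennreal)
    \<Rightarrow> ('a \<Rightarrow> real) \<Rightarrow> 'a \<Rightarrow> real" where
  "Lweak c \<kappa> J f x = Lim (at_right 0) (\<lambda>\<epsilon>. Lop c \<kappa> J \<epsilon> f x)"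

definition is_solution :: "pcase \<Rightarrow> ('a::euclidean_space \<Rightarrow> 'a \<Rightarrow> real) \<Rightarrow> ('a \<Rightarrow> ennreal)
    \<Rightarrow> real \<Rightarrow> (real \<Rightarrow> 'a \<Rightarrow> real) \<Rightarrow> bool" where
  "is_solution c \<kappa> J T u \<longleftrightarrow>
     continuous_on ({0..T} \<times> UNIV) (\<lambda>(t, x). u t x) \<and>
     (\<forall>e>0. \<exists>\<delta>>0. \<forall>t. 0 < t \<and> t < \<delta> \<longrightarrow> (\<forall>x. \<bar>u t x - u 0 x\<bar> \<le> e)) \<and>
     (\<forall>e>0. \<exists>R. \<forall>t\<in>{0..T}. \<forall>x. R \<le> norm x \<longrightarrow> \<bar>u t x\<bar> \<le> e) \<and>
     (\<forall>t\<in>{0<..T}. \<forall>x. Lweak_wd c \<kappa> J (u t) x \<and>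
         ((\<lambda>s. u s x) has_real_derivative Lweak c \<kappa> J (u t) x) (at t within {0..T}))"

end

theory Submission
  imports Defs
begin


lemma Lintegrand_nonpos:
  assumes mx: "\<And>y. f y \<le> f x" and d: "c = P1 \<Longrightarrow> f differentiable (at x)"
    and kp: "\<And>x z. 0 \<le> \<kappa> x z"
  shows "Lintegrand c \<kappa> J \<epsilon> f x z \<le> 0"
proof -
  have A: "(case c of
        P1 \<Rightarrow> f (x + z) - f x - (if norm z < 1 then frechet_derivative f (at x) z else 0)
      | P2 \<Rightarrow> f (x + z) - f x
      | P3 \<Rightarrow> (1/2) * (f (x + z) + f (x - z) - 2 * f x)) \<le> 0"
  proof (cases c)
    case P1
    have "frechet_derivative f (at x) = (\<lambda>v. 0)"
      by (rule differential_zero_maxmin[of x UNIV f]) (use d P1 mx frechet_derivative_works in auto)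
    then show ?thesis using P1 mx[of "x+z"] by simp
  next
    case P2 then show ?thesis using mx[of "x+z"] by simp
  next
    case P3 then show ?thesis using mx[of "x+z"] mx[of "x-z"] by simp
  qed
  show ?thesis unfolding Lintegrand_def
    by (intro mult_nonpos_nonneg A kp enn2real_nonneg) auto
qed

lemma Lop_nonpos:
  assumes mx: "\<And>y. f y \<le> f x" and d: "c = P1 \<Longrightarrow> f differentiable (at x)"
    and kp: "\<And>x z. 0 \<le> \<kappa> x z"
  shows "Lop c \<kappa> J \<epsilon> f x \<le> 0"
proof -
  have "0 \<le> (\<integral> z. - Lintegrand c \<kappa> J \<epsilon> f x z \<partial>lborel)"
    by (rule integral_nonneg_AE) (use Lintegrand_nonpos[OF mx d kp] in auto)
  then show ?thesis unfolding Lop_def by simp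
qed

lemma Lweak_le0:
  assumes wd: "Lweak_wd c \<kappa> J f x" and mx: "\<And>y. f y \<le> f x"
    and kp: "\<And>x z. 0 \<le> \<kappa> x z"
  shows "Lweak c \<kappa> J f x \<le> 0"
proof -
  obtain l where l: "((\<lambda>\<epsilon>. Lop c \<kappa> J \<epsilon> f x) \<longlongrightarrow> l) (at_right 0)"
    using wd unfolding Lweak_wd_def by blast
  have "Lweak c \<kappa> J f x = l" unfolding Lweak_def using l by (simp add: tendsto_Lim)
  moreover have "l \<le> 0"
  proof (rule tendsto_upperbound[OF l])
    show "\<forall>\<^sub>F \<epsilon> in at_right 0. Lop c \<kappa> J \<epsilon> f x \<le> 0"
      using eventually_at_right_real[of 0 1, OF zero_less_one]
    proof (rule eventually_mono)
      fix e :: real assume "e \<in> {0<..<1}"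
      then have "Lop_wd c \<kappa> J e f x" using wd unfolding Lweak_wd_def by auto
      then have d: "c = P1 \<Longrightarrow> f differentiable (at x)" by (auto simp: Lop_wd_def)
      show "Lop c \<kappa> J e f x \<le> 0"
        using Lop_nonpos[of f x c \<kappa> J e, OF mx d kp] by simp
    qed
  qed simp
  ultimately show ?thesis by simp
qed

lemma Lintegrand_diff:
  assumes "c = P1 \<Longrightarrow> f differentiable (at x)" "c = P1 \<Longrightarrow> g differentiable (at x)"
  shows "Lintegrand c \<kappa> J \<epsilon> (\<lambda>y. f y - g y) x z = Lintegrand c \<kappa> J \<epsilon> f x z - Lintegrand c \<kappa> J \<epsilon> g x z"
proof (cases c)
  case P1
  have "((\<lambda>y. f y - g y) has_derivative (\<lambda>v. frechet_derivative f (at x) v - frechet_derivative g (at x) v)) (at x)"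
    using assms P1 frechet_derivative_works by (intro has_derivative_diff) auto
  then have "frechet_derivative (\<lambda>y. f y - g y) (at x) = (\<lambda>v. frechet_derivative f (at x) v - frechet_derivative g (at x) v)"
    using frechet_derivative_at by metis
  then show ?thesis using P1 unfolding Lintegrand_def by (simp add: algebra_simps)
next
  case P2 then show ?thesis unfolding Lintegrand_def by (simp add: algebra_simps)
next
  case P3 then show ?thesis unfolding Lintegrand_def by (simp add: algebra_simps)
qed

lemma Lweak_diff_le0:
  assumes wf: "Lweak_wd c \<kappa> J f x" and wg: "Lweak_wd c \<kappa> J g x"
    and mx: "\<And>y. f y - g y \<le> f x - g x"
    and kp: "\<And>x z. 0 \<le> \<kappa> x z"
  shows "Lweak c \<kappa> J f x - Lweak c \<kappa> J g x \<le> 0"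
proof -
  obtain l1 where l1: "((\<lambda>\<epsilon>. Lop c \<kappa> J \<epsilon> f x) \<longlongrightarrow> l1) (at_right 0)"
    using wf unfolding Lweak_wd_def by blast
  obtain l2 where l2: "((\<lambda>\<epsilon>. Lop c \<kappa> J \<epsilon> g x) \<longlongrightarrow> l2) (at_right 0)"
    using wg unfolding Lweak_wd_def by blast
  have e1: "Lweak c \<kappa> J f x = l1" unfolding Lweak_def using l1 by (simp add: tendsto_Lim)
  have e2: "Lweak c \<kappa> J g x = l2" unfolding Lweak_def using l2 by (simp add: tendsto_Lim)
  have "l1 - l2 \<le> 0"
  proof (rule tendsto_upperbound[OF tendsto_diff[OF l1 l2]])
    show "\<forall>\<^sub>F \<epsilon> in at_right 0. Lop c \<kappa> J \<epsilon> f x - Lop c \<kappa> J \<epsilon> g x \<le> 0"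
      using eventually_at_right_real[of 0 1, OF zero_less_one]
    proof (rule eventually_mono)
      fix e :: real assume "e \<in> {0<..<1}"
      then have a: "Lop_wd c \<kappa> J e f x" and b: "Lop_wd c \<kappa> J e g x"
        using wf wg unfolding Lweak_wd_def by auto
      have df: "c = P1 \<Longrightarrow> f differentiable (at x)" and dg: "c = P1 \<Longrightarrow> g differentiable (at x)"
        using a b by (auto simp: Lop_wd_def)
      have "Lop c \<kappa> J e f x - Lop c \<kappa> J e g x = Lop c \<kappa> J e (\<lambda>y. f y - g y) x"
      proof -
        have eq: "Lintegrand c \<kappa> J e (\<lambda>y. f y - g y) x = (\<lambda>z. Lintegrand c \<kappa> J e f x z - Lintegrand c \<kappa> J e g x z)"
          using Lintegrand_diff[where c=c and \<kappa>=\<kappa> and J=J and \<epsilon>=e and f=f and g=g and x=x, OF df dg] by auto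
        show ?thesis unfolding Lop_def eq
          using a b by (simp add: integral_diff Lop_wd_def)
      qed
      also have "\<dots> \<le> 0"
        by (rule Lop_nonpos[of "\<lambda>y. f y - g y" x, OF mx _ kp]) (use df dg in auto)
      finally show "Lop c \<kappa> J e f x - Lop c \<kappa> J e g x \<le> 0" .
    qed
  qed simp
  then show ?thesis using e1 e2 by simp
qed



lemma bdd_slice:
  fixes u :: "real \<Rightarrow> 'a::euclidean_space \<Rightarrow> real"
  assumes cont: "continuous_on ({0..T} \<times> UNIV) (\<lambda>p. u (fst p) (snd p))"
    and decay: "\<forall>e>0. \<exists>R. \<forall>t\<in>{0..T}. \<forall>x. R \<le> norm x \<longrightarrow> \<bar>u t x\<bar> \<le> e"
    and t: "t \<in> {0..T}"
  shows "bdd_above (range (u t))"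
proof -
  obtain R where R: "\<forall>t\<in>{0..T}. \<forall>x. R \<le> norm x \<longrightarrow> \<bar>u t x\<bar> \<le> 1"
    using decay by (meson zero_less_one)
  have c1: "continuous_on (cball 0 R) (\<lambda>x. u t x)"
  proof -
    have "continuous_on (cball 0 R) ((\<lambda>p. u (fst p) (snd p)) \<circ> (\<lambda>x. (t, x)))"
      by (rule continuous_on_compose) (use t in \<open>auto intro!: continuous_intros continuous_on_subset[OF cont]\<close>)
    then show ?thesis by (simp add: o_def)
  qed
  show ?thesis
  proof (cases "cball (0::'a) R = {}")
    case True
    then have "\<forall>x. R \<le> norm x" by (auto simp: not_le intro: order.trans[OF _ norm_ge_zero])
    then have "\<And>x. u t x \<le> 1" using R t by (meson abs_le_iff)
    then show ?thesis by (intro bdd_aboveI[of _ 1]) auto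
  next
    case False
    obtain m where m: "m \<in> cball 0 R" "\<forall>y\<in>cball 0 R. u t y \<le> u t m"
      using continuous_attains_sup[OF compact_cball False c1] by blast
    show ?thesis
    proof (rule bdd_aboveI[of _ "max 1 (u t m)"])
      fix v assume "v \<in> range (u t)"
      then obtain x where x: "v = u t x" by auto
      show "v \<le> max 1 (u t m)"
      proof (cases "R \<le> norm x")
        case True then show ?thesis using R t x by force
      next
        case False
        then have "x \<in> cball 0 R" by simp
        then show ?thesis using m x by force
      qed
    qed
  qed
qed

lemma core:
  fixes u :: "real \<Rightarrow> 'a::euclidean_space \<Rightarrow> real"
  assumes cont: "continuous_on ({0..T} \<times> UNIV) (\<lambda>p. u (fst p) (snd p))"
    and decay: "\<forall>e>0. \<exists>R. \<forall>t\<in>{0..T}. \<forall>x. R \<le> norm x \<longrightarrow> \<bar>u t x\<bar> \<le> e"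
    and H: "\<And>s x. s \<in> {0<..T} \<Longrightarrow> (\<And>y. u s y \<le> u s x) \<Longrightarrow>
              \<exists>D. ((\<lambda>r. u r x) has_real_derivative D) (at s within {0..T}) \<and> D \<le> 0"
    and M: "0 \<le> (SUP x. u 0 x)"
    and t: "t \<in> {0<..T}"
  shows "u t x0 \<le> (SUP x. u 0 x)"
proof (rule ccontr)
  define M where "M = (SUP x. u 0 x)"
  have T0: "0 \<le> T" using t by auto
  have u0: "\<And>x. u 0 x \<le> M" unfolding M_def
    by (rule cSUP_upper) (auto intro: bdd_slice[OF cont decay] simp: T0)
  assume "\<not> u t x0 \<le> (SUP x. u 0 x)"
  then have lt: "M < u t x0" unfolding M_def by simp
  have tpos: "0 < t" and tT: "t \<le> T" using t by auto
  define \<eta> where "\<eta> = (u t x0 - M) / (2 * t)"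
  have \<eta>pos: "0 < \<eta>" unfolding \<eta>_def using lt tpos by simp
  define a where "a = u t x0 - \<eta> * t"
  have "\<eta> * t = (u t x0 - M) / 2" unfolding \<eta>_def using tpos by simp
  then have aM: "M < a" unfolding a_def using lt by simp
  have apos: "0 < a" using aM M unfolding M_def by simp
  obtain R where R: "\<forall>s\<in>{0..T}. \<forall>x. R \<le> norm x \<longrightarrow> \<bar>u s x\<bar> \<le> a/2"
    using decay apos by (meson half_gt_zero)
  define R' where "R' = max R (norm x0)"
  define K where "K = {0..t} \<times> cball (0::'a) R'"
  define g where "g = (\<lambda>p. u (fst p) (snd p) - \<eta> * fst p)"
  have inK: "(t, x0) \<in> K" unfolding K_def R'_def using tpos by auto
  have KT: "K \<subseteq> {0..T} \<times> UNIV" unfolding K_def using tT by auto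
  have gc: "continuous_on K g" unfolding g_def
    by (intro continuous_intros continuous_on_subset[OF cont KT])
  obtain p where p: "p \<in> K" "\<forall>q\<in>K. g q \<le> g p"
    using continuous_attains_sup[OF _ _ gc] inK unfolding K_def
    by (metis compact_Times compact_Icc compact_cball empty_iff)
  obtain s y where py: "p = (s, y)" by (cases p)
  have ga: "a \<le> g (s, y)" using p inK py unfolding a_def g_def by force
  have glob: "\<And>r x. r \<in> {0..t} \<Longrightarrow> u r x - \<eta> * r \<le> u s y - \<eta> * s"
  proof -
    fix r x assume r: "r \<in> {0..t}"
    show "u r x - \<eta> * r \<le> u s y - \<eta> * s"
    proof (cases "norm x \<le> R'")
      case True
      then have "(r, x) \<in> K" unfolding K_def using r by auto
      then show ?thesis using p py unfolding g_def by force
    next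
      case False
      then have "R \<le> norm x" unfolding R'_def by auto
      then have "u r x \<le> a/2" using R r tT by force
      moreover have "0 \<le> \<eta> * r" using \<eta>pos r by auto
      ultimately show ?thesis using ga apos unfolding g_def by simp
    qed
  qed
  have sK: "s \<in> {0..t}" using p py unfolding K_def by auto
  have spos: "0 < s"
  proof (rule ccontr)
    assume "\<not> 0 < s"
    then have "s = 0" using sK by auto
    then have "g (s, y) \<le> M" using u0[of y] unfolding g_def by simp
    then show False using ga aM by simp
  qed
  have sT: "s \<in> {0<..T}" using spos sK tT by auto
  have mx: "\<And>x. u s x \<le> u s y" using glob[OF sK] by simp
  obtain D where D: "((\<lambda>r. u r y) has_real_derivative D) (at s within {0..T})" "D \<le> 0"
    using H[OF sT mx] by blast
  have D2: "((\<lambda>r. u r y) has_real_derivative D) (at s within {0..s})"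
    by (rule has_field_derivative_subset[OF D(1)]) (use sT in auto)
  then have lim: "((\<lambda>r. (u r y - u s y) / (r - s)) \<longlongrightarrow> D) (at_left s)"
    unfolding has_field_derivative_iff at_within_Icc_at_left[OF spos] .
  have "\<eta> \<le> D"
  proof (rule tendsto_lowerbound[OF lim])
    show "\<forall>\<^sub>F r in at_left s. \<eta> \<le> (u r y - u s y) / (r - s)"
      using eventually_at_left_real[OF spos]
    proof (rule eventually_mono)
      fix r assume r: "r \<in> {0<..<s}"
      then have "u r y - \<eta> * r \<le> u s y - \<eta> * s" using glob sK by auto
      then have "\<eta> * (s - r) \<le> u s y - u r y" by (simp add: algebra_simps)
      then have "\<eta> \<le> (u s y - u r y) / (s - r)" using r by (simp add: pos_le_divide_eq)
      also have "\<dots> = (u r y - u s y) / (r - s)"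
        by (metis minus_diff_eq minus_divide_divide)
      finally show "\<eta> \<le> (u r y - u s y) / (r - s)" .
    qed
  qed simp
  then show False using D(2) \<eta>pos by simp
qed

theorem theorem4p1:
  fixes \<nu> :: "real \<Rightarrow> ennreal" and J :: "'a::euclidean_space \<Rightarrow> ennreal"
    and \<kappa> :: "'a \<Rightarrow> 'a \<Rightarrow> real" and \<Lambda> \<kappa>0 \<kappa>1 \<kappa>2 \<beta> T :: real and c :: pcase
  assumes \<nu>_mono: "\<And>r s. 0 \<le> r \<Longrightarrow> r \<le> s \<Longrightarrow> \<nu> s \<le> \<nu> r"
    and \<nu>_int: "(\<integral>\<^sup>+ x. ennreal (min 1 (norm (x::'a)^2)) * \<nu> (norm x) \<partial>lborel) < \<infinity>"
    and J_meas: "J \<in> borel_measurable borel"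
    and \<Lambda>: "1 \<le> \<Lambda>"
    and J_lower: "\<And>x. ennreal (1 / \<Lambda>) * \<nu> (norm x) \<le> J x"
    and J_upper: "\<And>x. J x \<le> ennreal \<Lambda> * \<nu> (norm x)"
    and \<kappa>_meas: "(\<lambda>p. \<kappa> (fst p) (snd p)) \<in> borel_measurable borel"
    and \<kappa>0: "0 < \<kappa>0"
    and \<kappa>_bounds: "\<And>x z. \<kappa>0 \<le> \<kappa> x z \<and> \<kappa> x z \<le> \<kappa>1"
    and \<kappa>_hoelder: "\<And>x y z. \<bar>\<kappa> x z - \<kappa> y z\<bar> \<le> \<kappa>2 * norm (x - y) powr \<beta>"
    and \<beta>: "0 < \<beta>" "\<beta> < 1"
    and P: "case_hyp c \<nu> J \<kappa>"
    and T: "0 < T"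
  shows "(\<forall>u. is_solution c \<kappa> J T u \<longrightarrow> (SUP x. u 0 x) \<ge> 0 \<longrightarrow>
            (\<forall>t\<in>{0<..T}. (SUP x. u t x) \<le> (SUP x. u 0 x)))
       \<and> (\<forall>u1 u2. is_solution c \<kappa> J T u1 \<longrightarrow> is_solution c \<kappa> J T u2 \<longrightarrow> u1 0 = u2 0 \<longrightarrow>
            (\<forall>t\<in>{0..T}. \<forall>x. u1 t x = u2 t x))"
  proof -
  have kp: "\<And>x z. 0 \<le> \<kappa> x z" using \<kappa>_bounds \<kappa>0 by (meson less_le_trans less_imp_le)
  have contc: "continuous_on ({0..T} \<times> UNIV) (\<lambda>p. u (fst p) (snd p))"
    if "is_solution c \<kappa> J T u" for u :: "real \<Rightarrow> 'a \<Rightarrow> real"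
  proof -
    have "(\<lambda>(t, x). u t x) = (\<lambda>p. u (fst p) (snd p))" by (auto simp: fun_eq_iff)
    then show ?thesis using that unfolding is_solution_def by metis
  qed
  have part1: "\<And>u. is_solution c \<kappa> J T u \<Longrightarrow> 0 \<le> (SUP x. u 0 x) \<Longrightarrow> t \<in> {0<..T} \<Longrightarrow> u t x \<le> (SUP x. u 0 x)" for t :: real and x :: 'a
  proof -
    fix u :: "real \<Rightarrow> 'a \<Rightarrow> real"
    assume sol: "is_solution c \<kappa> J T u" and M: "0 \<le> (SUP x. u 0 x)" and t: "t \<in> {0<..T}"
    show "u t x \<le> (SUP x. u 0 x)"
    proof (rule core[OF contc[OF sol] _ _ M t])
      show "\<forall>e>0. \<exists>R. \<forall>t\<in>{0..T}. \<forall>x. R \<le> norm x \<longrightarrow> \<bar>u t x\<bar> \<le> e"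
        using sol unfolding is_solution_def by blast
      fix s y assume s: "s \<in> {0<..T}" and mx: "\<And>z. u s z \<le> u s y"
      have "Lweak_wd c \<kappa> J (u s) y \<and> ((\<lambda>r. u r y) has_real_derivative Lweak c \<kappa> J (u s) y) (at s within {0..T})"
        using sol s unfolding is_solution_def by blast
      then show "\<exists>D. ((\<lambda>r. u r y) has_real_derivative D) (at s within {0..T}) \<and> D \<le> 0"
        using Lweak_le0[of c \<kappa> J "u s" y, OF _ mx kp] by blast
    qed
  qed
  have A: "\<forall>u. is_solution c \<kappa> J T u \<longrightarrow> (SUP x. u 0 x) \<ge> 0 \<longrightarrow>
            (\<forall>t\<in>{0<..T}. (SUP x. u t x) \<le> (SUP x. u 0 x))"
    using part1 by (auto intro!: cSUP_least)
  have B0: "u1 t x - u2 t x \<le> 0"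
    if s1: "is_solution c \<kappa> J T u1" and s2: "is_solution c \<kappa> J T u2" and e0: "u1 0 = u2 0"
      and t: "t \<in> {0<..T}" for u1 u2 :: "real \<Rightarrow> 'a \<Rightarrow> real" and t :: real and x :: 'a
  proof -
    define w where "w = (\<lambda>t x. u1 t x - u2 t x)"
    have w0: "(SUP x. w 0 x) = 0" unfolding w_def using e0 by simp
    have "w t x \<le> (SUP x. w 0 x)"
    proof (rule core)
      show "continuous_on ({0..T} \<times> UNIV) (\<lambda>p. w (fst p) (snd p))"
        unfolding w_def by (intro continuous_on_diff contc s1 s2)
      show "\<forall>e>0. \<exists>R. \<forall>t\<in>{0..T}. \<forall>x. R \<le> norm x \<longrightarrow> \<bar>w t x\<bar> \<le> e"
      proof (intro allI impI)
        fix e :: real assume e: "0 < e"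
        obtain R1 where R1: "\<forall>t\<in>{0..T}. \<forall>x. R1 \<le> norm x \<longrightarrow> \<bar>u1 t x\<bar> \<le> e/2"
          using s1 e unfolding is_solution_def by (meson half_gt_zero)
        obtain R2 where R2: "\<forall>t\<in>{0..T}. \<forall>x. R2 \<le> norm x \<longrightarrow> \<bar>u2 t x\<bar> \<le> e/2"
          using s2 e unfolding is_solution_def by (meson half_gt_zero)
        show "\<exists>R. \<forall>t\<in>{0..T}. \<forall>x. R \<le> norm x \<longrightarrow> \<bar>w t x\<bar> \<le> e"
        proof (intro exI[of _ "max R1 R2"] ballI allI impI)
          fix t and x :: 'a assume "t \<in> {0..T}" "max R1 R2 \<le> norm x"
          then have "\<bar>u1 t x\<bar> \<le> e/2" "\<bar>u2 t x\<bar> \<le> e/2" using R1 R2 by auto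
          then show "\<bar>w t x\<bar> \<le> e" unfolding w_def by linarith
        qed
      qed
      show "0 \<le> (SUP x. w 0 x)" using w0 by simp
      show "t \<in> {0<..T}" by (rule t)
      fix s y assume s: "s \<in> {0<..T}" and mx: "\<And>z. w s z \<le> w s y"
      have h1: "Lweak_wd c \<kappa> J (u1 s) y \<and> ((\<lambda>r. u1 r y) has_real_derivative Lweak c \<kappa> J (u1 s) y) (at s within {0..T})"
        using s1 s unfolding is_solution_def by blast
      have h2: "Lweak_wd c \<kappa> J (u2 s) y \<and> ((\<lambda>r. u2 r y) has_real_derivative Lweak c \<kappa> J (u2 s) y) (at s within {0..T})"
        using s2 s unfolding is_solution_def by blast
      have "((\<lambda>r. w r y) has_real_derivative Lweak c \<kappa> J (u1 s) y - Lweak c \<kappa> J (u2 s) y) (at s within {0..T})"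
        unfolding w_def using h1 h2 by (intro DERIV_diff) auto
      moreover have "Lweak c \<kappa> J (u1 s) y - Lweak c \<kappa> J (u2 s) y \<le> 0"
        using Lweak_diff_le0[of c \<kappa> J "u1 s" y "u2 s", OF _ _ _ kp] h1 h2 mx unfolding w_def by blast
      ultimately show "\<exists>D. ((\<lambda>r. w r y) has_real_derivative D) (at s within {0..T}) \<and> D \<le> 0" by blast
    qed
    then show ?thesis using w0 unfolding w_def by simp
  qed
  have B: "\<forall>u1 u2. is_solution c \<kappa> J T u1 \<longrightarrow> is_solution c \<kappa> J T u2 \<longrightarrow> u1 0 = u2 0 \<longrightarrow>
            (\<forall>t\<in>{0..T}. \<forall>x. u1 t x = u2 t x)"
  proof (intro allI impI ballI)
    fix u1 u2 t x
    assume s1: "is_solution c \<kappa> J T u1" and s2: "is_solution c \<kappa> J T u2" and e0: "u1 0 = u2 0"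
      and t: "t \<in> {0..T}"
    show "u1 t x = u2 t x"
    proof (cases "t = 0")
      case True then show ?thesis using e0 by simp
    next
      case False
      then have "t \<in> {0<..T}" using t by auto
      then have "u1 t x - u2 t x \<le> 0" "u2 t x - u1 t x \<le> 0"
        using B0[OF s1 s2 e0] B0[OF s2 s1 e0[symmetric]] by auto
      then show ?thesis by simp
    qed
  qed
  show ?thesis using A B by blast
qed

end
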